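(* Let $n\ge1$ and on $\mathbb{D}^n$ (coordinates $\alpha_0,\dots,\alpha_{n-1}$) use the Poisson bracket described in the context. Let $\Phi_n$ be the monic orthogonal polynomial on the unit circle and $\Phi_n^*$ its reversed polynomial. Then for all $z,w$, \[ \{\Phi_n(z),\Phi_n^*(w)\}=i\,w\,\frac{\Phi_n(z)\Phi_n^*(w)-\Phi_n(w)\Phi_n^*(z)}{z-w}. \]
   Context: Let $\rho_j=(1-|\alpha_j|^2)^{1/2}$; the Poisson bracket is $\{f,g\}=\sum_{j=0}^{n-1}i\rho_j^2\bigl(\frac{\partial f}{\partial\bar\alpha_j}\frac{\partial g}{\partial\alpha_j}-\frac{\partial f}{\partial\alpha_j}\frac{\partial g}{\partial\bar\alpha_j}\bigr)$ (Wirtinger derivatives), i.e. $\{\alpha_j,\alpha_k\}=0$, $\{\alpha_j,\bar\alpha_k\}=-i\rho_j^2\delta_{jk}$; $z,w$ are held fixed. $\Phi_0=1$, $\Phi_{k+1}(z)=z\Phi_k(z)-\bar\alpha_k\Phi_k^*(z)$, $\Phi_k^*(z)=z^k\overline{\Phi_k(1/\bar z)}$. The identity is an identity of polynomials in $z,w$. *)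

theory Defs
  imports "HOL-Analysis.Analysis" "HOL-Computational_Algebra.Polynomial"
begin

text \<open>Points of the polydisc are functions alpha :: nat => complex; only the
coordinates alpha 0, ..., alpha (n-1) matter.\<close>

definition polydisc :: "nat \<Rightarrow> (nat \<Rightarrow> complex) set" where
  "polydisc n = {a. \<forall>j<n. norm (a j) < 1}"

definition dRe :: "((nat \<Rightarrow> complex) \<Rightarrow> complex) \<Rightarrow> (nat \<Rightarrow> complex) \<Rightarrow> nat \<Rightarrow> complex" where
  "dRe f a j = vector_derivative (\<lambda>t::real. f (a(j := a j + of_real t))) (at 0)"

definition dIm :: "((nat \<Rightarrow> complex) \<Rightarrow> complex) \<Rightarrow> (nat \<Rightarrow> complex) \<Rightarrow> nat \<Rightarrow> complex" where
  "dIm f a j = vector_derivative (\<lambda>t::real. f (a(j := a j + \<i> * of_real t))) (at 0)"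

definition wirt :: "((nat \<Rightarrow> complex) \<Rightarrow> complex) \<Rightarrow> (nat \<Rightarrow> complex) \<Rightarrow> nat \<Rightarrow> complex" where
  "wirt f a j = (dRe f a j - \<i> * dIm f a j) / 2"

definition wirt_bar :: "((nat \<Rightarrow> complex) \<Rightarrow> complex) \<Rightarrow> (nat \<Rightarrow> complex) \<Rightarrow> nat \<Rightarrow> complex" where
  "wirt_bar f a j = (dRe f a j + \<i> * dIm f a j) / 2"

definition pbracket :: "nat \<Rightarrow> ((nat \<Rightarrow> complex) \<Rightarrow> complex) \<Rightarrow> ((nat \<Rightarrow> complex) \<Rightarrow> complex)
    \<Rightarrow> (nat \<Rightarrow> complex) \<Rightarrow> complex" where
  "pbracket n f g a = (\<Sum>j<n. \<i> * of_real (1 - (norm (a j))\<^sup>2) *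
      (wirt_bar f a j * wirt g a j - wirt f a j * wirt_bar g a j))"

text \<open>Reversed polynomial of degree (at most) k: p^*(z) = z^k conj(p(1/conj z)),
  i.e. the coefficients are conjugated and reversed.\<close>

definition rev_poly :: "nat \<Rightarrow> complex poly \<Rightarrow> complex poly" where
  "rev_poly k p = (\<Sum>i\<le>k. monom (cnj (coeff p (k - i))) i)"

text \<open>Monic orthogonal polynomials via the Szego recursion with Verblunsky coefficients a.\<close>

fun OPUC :: "(nat \<Rightarrow> complex) \<Rightarrow> nat \<Rightarrow> complex poly" where
  "OPUC a 0 = 1"
| "OPUC a (Suc k) = [:0, 1:] * OPUC a k - smult (cnj (a k)) (rev_poly k (OPUC a k))"

definition Phi :: "nat \<Rightarrow> complex \<Rightarrow> (nat \<Rightarrow> complex) \<Rightarrow> complex" where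
  "Phi k z a = poly (OPUC a k) z"

definition Phi_star :: "nat \<Rightarrow> complex \<Rightarrow> (nat \<Rightarrow> complex) \<Rightarrow> complex" where
  "Phi_star k z a = poly (rev_poly k (OPUC a k)) z"

end

theory Submission
  imports Defs
begin

lemma coeff_rev_poly:
  "coeff (rev_poly k p) i = (if i \<le> k then cnj (coeff p (k - i)) else 0)"
  unfolding rev_poly_def by (simp add: coeff_sum coeff_monom)

lemma degree_rev_poly: "degree (rev_poly k p) \<le> k"
  by (rule degree_le) (simp add: coeff_rev_poly)

lemma degree_OPUC: "degree (OPUC a k) \<le> k"
proof (induction k)
  case 0 then show ?case by simp
next
  case (Suc k)
  have "degree ([:0, 1:] * OPUC a k) \<le> Suc k"
    using degree_mult_le[of "[:0, 1:]" "OPUC a k"] Suc by simp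
  moreover have "degree (smult (cnj (a k)) (rev_poly k (OPUC a k))) \<le> Suc k"
    using degree_rev_poly degree_smult_le le_SucI order_trans by blast
  ultimately show ?case by (simp add: degree_diff_le)
qed

lemma rev_OPUC_Suc:
  "rev_poly (Suc k) (OPUC a (Suc k)) = rev_poly k (OPUC a k) - smult (a k) ([:0, 1:] * OPUC a k)"
proof (rule poly_eqI)
  fix i
  have d: "coeff (OPUC a k) m = 0" if "m > k" for m
    using degree_OPUC[of a k] that by (simp add: coeff_eq_0)
  show "coeff (rev_poly (Suc k) (OPUC a (Suc k))) i =
        coeff (rev_poly k (OPUC a k) - smult (a k) ([:0, 1:] * OPUC a k)) i"
  proof (cases i)
    case 0
    then show ?thesis by (simp add: coeff_rev_poly coeff_pCons d)
  next
    case (Suc m)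
    then show ?thesis
      apply (auto simp add: coeff_rev_poly coeff_pCons d Suc_diff_le split: nat.splits)
      apply (subgoal_tac "x2 = k - Suc m")
       apply simp
      apply arith
      done
  qed
qed

fun PQ :: "(nat \<Rightarrow> complex) \<Rightarrow> complex \<Rightarrow> nat \<Rightarrow> complex \<times> complex" where
  "PQ a z 0 = (1, 1)"
| "PQ a z (Suc k) = (z * fst (PQ a z k) - cnj (a k) * snd (PQ a z k),
                     snd (PQ a z k) - a k * z * fst (PQ a z k))"

lemma PQ_Phi: "PQ a z k = (Phi k z a, Phi_star k z a)"
proof (induction k)
  case 0 then show ?case by (simp add: Phi_def Phi_star_def rev_poly_def)
next
  case (Suc k)
  have "Phi_star (Suc k) z a = Phi_star k z a - a k * z * Phi k z a"
    unfolding Phi_star_def Phi_def by (simp only: rev_OPUC_Suc) simp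
  moreover have "Phi (Suc k) z a = z * Phi k z a - cnj (a k) * Phi_star k z a"
    unfolding Phi_star_def Phi_def by simp
  ultimately show ?case using Suc by simp
qed

fun der :: "(nat \<Rightarrow> complex) \<Rightarrow> complex \<Rightarrow> nat \<Rightarrow> nat \<Rightarrow> complex \<times> complex \<times> complex \<times> complex" where
  "der a z j 0 = (0, 0, 0, 0)"
| "der a z j (Suc k) = (if j = k then (0, - snd (PQ a z k), - z * fst (PQ a z k), 0)
     else (case der a z j k of (dp, ep, dq, eq) \<Rightarrow>
       (z * dp - cnj (a k) * dq, z * ep - cnj (a k) * eq, dq - a k * z * dp, eq - a k * z * ep)))"

definition "dP a z j k = fst (der a z j k)"
definition "eP a z j k = fst (snd (der a z j k))"
definition "dQ a z j k = fst (snd (snd (der a z j k)))"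
definition "eQ a z j k = snd (snd (snd (der a z j k)))"

lemma der_Suc:
  "dP a z j (Suc k) = (if j = k then 0 else z * dP a z j k - cnj (a k) * dQ a z j k)"
  "eP a z j (Suc k) = (if j = k then - snd (PQ a z k) else z * eP a z j k - cnj (a k) * eQ a z j k)"
  "dQ a z j (Suc k) = (if j = k then - z * fst (PQ a z k) else dQ a z j k - a k * z * dP a z j k)"
  "eQ a z j (Suc k) = (if j = k then 0 else eQ a z j k - a k * z * eP a z j k)"
  unfolding dP_def eP_def dQ_def eQ_def by (auto split: prod.splits)

lemma der_zero: "k \<le> j \<Longrightarrow> der a z j k = (0, 0, 0, 0)"
  by (induction k) auto

lemma PQ_pert:
  "PQ (a(j := a j + s)) z k =
    (fst (PQ a z k) + s * dP a z j k + cnj s * eP a z j k,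
     snd (PQ a z k) + s * dQ a z j k + cnj s * eQ a z j k)"
proof (induction k)
  case 0 then show ?case by (simp add: dP_def eP_def dQ_def eQ_def)
next
  case (Suc k)
  show ?case
  proof (cases "j = k")
    case True
    then have "der a z j k = (0,0,0,0)" by (simp add: der_zero)
    then have "dP a z j k = 0" "eP a z j k = 0" "dQ a z j k = 0" "eQ a z j k = 0"
      by (simp_all add: dP_def eP_def dQ_def eQ_def)
    with Suc True show ?thesis by (simp add: der_Suc algebra_simps)
  next
    case False
    with Suc show ?thesis by (simp add: der_Suc algebra_simps)
  qed
qed

lemma vd_lin: "vector_derivative (\<lambda>t::real. c + of_real t * (d::complex)) (at 0) = d"
proof -
  have "((\<lambda>t::real. c + of_real t * d) has_vector_derivative d) (at 0)"
    unfolding has_vector_derivative_def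
    by (auto intro!: derivative_eq_intros simp: scaleR_conv_of_real)
  then show ?thesis by (rule vector_derivative_at)
qed

lemma wirt_affine:
  assumes "\<And>s. f (a(j := a j + s)) = c + s * D + cnj s * E"
  shows "wirt f a j = D" "wirt_bar f a j = E"
proof -
  have 1: "(\<lambda>t::real. f (a(j := a j + of_real t))) = (\<lambda>t. c + of_real t * (D + E))"
  proof
    fix t :: real
    have "f (a(j := a j + of_real t)) = c + of_real t * D + cnj (of_real t) * E" by (rule assms)
    then show "f (a(j := a j + of_real t)) = c + of_real t * (D + E)" by (simp add: algebra_simps)
  qed
  have 2: "(\<lambda>t::real. f (a(j := a j + \<i> * of_real t))) = (\<lambda>t. c + of_real t * (\<i> * D - \<i> * E))"
  proof
    fix t :: real
    have "f (a(j := a j + \<i> * of_real t)) = c + (\<i> * of_real t) * D + cnj (\<i> * of_real t) * E" by (rule assms)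
    then show "f (a(j := a j + \<i> * of_real t)) = c + of_real t * (\<i> * D - \<i> * E)" by (simp add: algebra_simps)
  qed
  have 3: "dRe f a j = D + E" unfolding dRe_def 1 by (rule vd_lin)
  have 4: "dIm f a j = \<i> * D - \<i> * E" unfolding dIm_def 2 by (rule vd_lin)
  have 5: "\<i> * (\<i> * D - \<i> * E) = E - D" by (simp add: algebra_simps)
  show "wirt f a j = D" "wirt_bar f a j = E"
    unfolding wirt_def wirt_bar_def 3 4 5 by simp_all
qed

lemma wirt_Phi:
  "wirt (Phi k z) a j = dP a z j k" "wirt_bar (Phi k z) a j = eP a z j k"
  "wirt (Phi_star k z) a j = dQ a z j k" "wirt_bar (Phi_star k z) a j = eQ a z j k"
proof -
  have "\<And>s. Phi k z (a(j := a j + s)) = Phi k z a + s * dP a z j k + cnj s * eP a z j k"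
    using PQ_pert[of a j _ z k] by (simp add: PQ_Phi)
  then show "wirt (Phi k z) a j = dP a z j k" "wirt_bar (Phi k z) a j = eP a z j k"
    by (rule wirt_affine)+
  have "\<And>s. Phi_star k z (a(j := a j + s)) = Phi_star k z a + s * dQ a z j k + cnj s * eQ a z j k"
    using PQ_pert[of a j _ z k] by (simp add: PQ_Phi)
  then show "wirt (Phi_star k z) a j = dQ a z j k" "wirt_bar (Phi_star k z) a j = eQ a z j k"
    by (rule wirt_affine)+
qed
definition br :: "(nat \<Rightarrow> complex) \<Rightarrow> nat \<Rightarrow> (nat \<Rightarrow> complex) \<Rightarrow> (nat \<Rightarrow> complex)
    \<Rightarrow> (nat \<Rightarrow> complex) \<Rightarrow> (nat \<Rightarrow> complex) \<Rightarrow> complex" where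
  "br a n d1 e1 d2 e2 = (\<Sum>j<n. \<i> * of_real (1 - (norm (a j))\<^sup>2) * (e1 j * d2 j - d1 j * e2 j))"

lemma br_Suc: "br a (Suc n) d1 e1 d2 e2 = br a n d1 e1 d2 e2
   + \<i> * of_real (1 - (norm (a n))\<^sup>2) * (e1 n * d2 n - d1 n * e2 n)"
  unfolding br_def by simp

lemma br_cong:
  assumes "\<And>j. j < n \<Longrightarrow> d1 j = d1' j" "\<And>j. j < n \<Longrightarrow> e1 j = e1' j"
    "\<And>j. j < n \<Longrightarrow> d2 j = d2' j" "\<And>j. j < n \<Longrightarrow> e2 j = e2' j"
  shows "br a n d1 e1 d2 e2 = br a n d1' e1' d2' e2'"
  unfolding br_def by (rule sum.cong) (auto simp: assms)

lemma br_antisym: "br a n d1 e1 d2 e2 = - br a n d2 e2 d1 e1"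
  unfolding br_def by (simp add: sum_negf[symmetric] algebra_simps)

lemma br_bilin:
  "br a n (\<lambda>j. c1 * d1 j + c2 * d2 j) (\<lambda>j. c1 * e1 j + c2 * e2 j)
          (\<lambda>j. c3 * d3 j + c4 * d4 j) (\<lambda>j. c3 * e3 j + c4 * e4 j)
   = c1 * c3 * br a n d1 e1 d3 e3 + c1 * c4 * br a n d1 e1 d4 e4
   + c2 * c3 * br a n d2 e2 d3 e3 + c2 * c4 * br a n d2 e2 d4 e4"
  unfolding br_def sum_distrib_left sum.distrib[symmetric]
  by (rule sum.cong) (simp_all add: algebra_simps)

definition "BPQ a n z w = br a n (\<lambda>j. dP a z j n) (\<lambda>j. eP a z j n) (\<lambda>j. dQ a w j n) (\<lambda>j. eQ a w j n)"
definition "BPP a n z w = br a n (\<lambda>j. dP a z j n) (\<lambda>j. eP a z j n) (\<lambda>j. dP a w j n) (\<lambda>j. eP a w j n)"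
definition "BQQ a n z w = br a n (\<lambda>j. dQ a z j n) (\<lambda>j. eQ a z j n) (\<lambda>j. dQ a w j n) (\<lambda>j. eQ a w j n)"

lemma BQP: "br a n (\<lambda>j. dQ a z j n) (\<lambda>j. eQ a z j n) (\<lambda>j. dP a w j n) (\<lambda>j. eP a w j n) = - BPQ a n w z"
  unfolding BPQ_def by (rule br_antisym)

lemma levelP: "j < n \<Longrightarrow> dP a z j (Suc n) = z * dP a z j n + (- cnj (a n)) * dQ a z j n"
  "j < n \<Longrightarrow> eP a z j (Suc n) = z * eP a z j n + (- cnj (a n)) * eQ a z j n"
  by (simp_all add: der_Suc)
lemma levelQ: "j < n \<Longrightarrow> dQ a z j (Suc n) = 1 * dQ a z j n + (- a n * z) * dP a z j n"
  "j < n \<Longrightarrow> eQ a z j (Suc n) = 1 * eQ a z j n + (- a n * z) * eP a z j n"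
  by (simp_all add: der_Suc)
lemma levelQ': "j < n \<Longrightarrow> dQ a z j (Suc n) = (- a n * z) * dP a z j n + 1 * dQ a z j n"
  "j < n \<Longrightarrow> eQ a z j (Suc n) = (- a n * z) * eP a z j n + 1 * eQ a z j n"
  by (simp_all add: der_Suc)

lemma BPQ_Suc: "BPQ a (Suc n) z w =
   z * BPQ a n z w + z * (- a n * w) * BPP a n z w + (- cnj (a n)) * BQQ a n z w
   + (- cnj (a n)) * (- a n * w) * (- BPQ a n w z)
   + \<i> * of_real (1 - (norm (a n))\<^sup>2) * (snd (PQ a z n) * (w * fst (PQ a w n)))"
proof -
  have "BPQ a (Suc n) z w = br a n
     (\<lambda>j. z * dP a z j n + (- cnj (a n)) * dQ a z j n) (\<lambda>j. z * eP a z j n + (- cnj (a n)) * eQ a z j n)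
     (\<lambda>j. 1 * dQ a w j n + (- a n * w) * dP a w j n) (\<lambda>j. 1 * eQ a w j n + (- a n * w) * eP a w j n)
     + \<i> * of_real (1 - (norm (a n))\<^sup>2) * (snd (PQ a z n) * (w * fst (PQ a w n)))"
    unfolding BPQ_def br_Suc by (intro arg_cong2[where f="(+)"] br_cong) (simp_all add: der_Suc)
  then show ?thesis unfolding br_bilin BQP by (simp add: BPQ_def BPP_def BQQ_def)
qed

lemma BPP_Suc: "BPP a (Suc n) z w =
   z * w * BPP a n z w + z * (- cnj (a n)) * BPQ a n z w + (- cnj (a n)) * w * (- BPQ a n w z)
   + (- cnj (a n)) * (- cnj (a n)) * BQQ a n z w"
proof -
  have "BPP a (Suc n) z w = br a n
     (\<lambda>j. z * dP a z j n + (- cnj (a n)) * dQ a z j n) (\<lambda>j. z * eP a z j n + (- cnj (a n)) * eQ a z j n)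
     (\<lambda>j. w * dP a w j n + (- cnj (a n)) * dQ a w j n) (\<lambda>j. w * eP a w j n + (- cnj (a n)) * eQ a w j n)"
    unfolding BPP_def br_Suc by (simp add: der_Suc, intro br_cong, simp_all add: der_Suc)
  then show ?thesis unfolding br_bilin BQP by (simp add: BPQ_def BPP_def BQQ_def)
qed

lemma BQQ_Suc: "BQQ a (Suc n) z w =
   (- a n * z) * (- a n * w) * BPP a n z w + (- a n * z) * 1 * BPQ a n z w + 1 * (- a n * w) * (- BPQ a n w z)
   + 1 * 1 * BQQ a n z w"
proof -
  have "BQQ a (Suc n) z w = br a n
     (\<lambda>j. (- a n * z) * dP a z j n + 1 * dQ a z j n) (\<lambda>j. (- a n * z) * eP a z j n + 1 * eQ a z j n)
     (\<lambda>j. (- a n * w) * dP a w j n + 1 * dQ a w j n) (\<lambda>j. (- a n * w) * eP a w j n + 1 * eQ a w j n)"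
    unfolding BQQ_def br_Suc by (simp add: der_Suc, intro br_cong, simp_all add: der_Suc)
  then show ?thesis unfolding br_bilin BQP by (simp add: BPQ_def BPP_def BQQ_def)
qed
lemma r_eq: "(of_real (1 - (norm x)\<^sup>2) :: complex) = 1 - cnj x * x"
  by (metis complex_norm_square mult.commute of_real_1 of_real_diff)

lemma main_alg:
  assumes "z \<noteq> w"
  shows "(z - w) * BPQ a n z w = \<i> * w * (fst (PQ a z n) * snd (PQ a w n) - fst (PQ a w n) * snd (PQ a z n))
     \<and> BPP a n z w = 0 \<and> BQQ a n z w = 0"
  using assms
proof (induction n arbitrary: z w)
  case 0
  then show ?case by (simp add: BPQ_def BPP_def BQQ_def br_def)
next
  case (Suc n)
  define al where "al = a n"
  define Pz where "Pz = fst (PQ a z n)"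
  define Pw where "Pw = fst (PQ a w n)"
  define Qz where "Qz = snd (PQ a z n)"
  define Qw where "Qw = snd (PQ a w n)"
  define B1 where "B1 = BPQ a n z w"
  define B2 where "B2 = BPQ a n w z"
  have wz: "w \<noteq> z" using Suc.prems by auto
  have e1: "(z - w) * B1 = \<i> * w * (Pz * Qw - Pw * Qz)" and p0: "BPP a n z w = 0" and q0: "BQQ a n z w = 0"
    using Suc.IH[OF Suc.prems] by (simp_all add: B1_def Pz_def Pw_def Qz_def Qw_def)
  have e2: "(w - z) * B2 = \<i> * z * (Pw * Qz - Pz * Qw)"
    using Suc.IH[OF wz] by (simp add: B2_def Pz_def Pw_def Qz_def Qw_def)
  have r: "(of_real (1 - (norm (a n))\<^sup>2) :: complex) = 1 - cnj al * al" unfolding al_def by (rule r_eq)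
  have s1: "(z - w) * BPQ a (Suc n) z w =
     z * ((z - w) * B1) + cnj al * al * w * ((w - z) * B2) + (z - w) * \<i> * (1 - cnj al * al) * w * Qz * Pw"
    unfolding BPQ_Suc p0 q0 r by (simp add: B1_def B2_def Pz_def Pw_def Qz_def Qw_def al_def algebra_simps)
  have g1: "(z - w) * BPQ a (Suc n) z w = \<i> * w * (fst (PQ a z (Suc n)) * snd (PQ a w (Suc n)) - fst (PQ a w (Suc n)) * snd (PQ a z (Suc n)))"
    unfolding s1 e1 e2 by (simp add: Pz_def Pw_def Qz_def Qw_def al_def algebra_simps)
  have s2: "(z - w) * BPP a (Suc n) z w = - cnj al * z * ((z - w) * B1) - cnj al * w * ((w - z) * B2)"
    unfolding BPP_Suc p0 q0 by (simp add: B1_def B2_def al_def algebra_simps)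
  have "(z - w) * BPP a (Suc n) z w = 0"
    unfolding s2 e1 e2 by (simp add: algebra_simps)
  then have g2: "BPP a (Suc n) z w = 0" using Suc.prems by simp
  have s3: "(z - w) * BQQ a (Suc n) z w = - al * z * ((z - w) * B1) - al * w * ((w - z) * B2)"
    unfolding BQQ_Suc p0 q0 by (simp add: B1_def B2_def al_def algebra_simps)
  have "(z - w) * BQQ a (Suc n) z w = 0"
    unfolding s3 e1 e2 by (simp add: algebra_simps)
  then have g3: "BQQ a (Suc n) z w = 0" using Suc.prems by simp
  show ?case using g1 g2 g3 by blast
qed
theorem theorem13p5:
  fixes n :: nat and z w :: complex and a :: "nat \<Rightarrow> complex"
  assumes "n \<ge> 1" and "a \<in> polydisc n" and "z \<noteq> w"
  shows "pbracket n (Phi n z) (Phi_star n w) a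
     = \<i> * w * (Phi n z a * Phi_star n w a - Phi n w a * Phi_star n z a) / (z - w)"
proof -
  have 1: "pbracket n (Phi n z) (Phi_star n w) a = BPQ a n z w"
    unfolding pbracket_def BPQ_def br_def wirt_Phi ..
  have 2: "(z - w) * BPQ a n z w = \<i> * w * (Phi n z a * Phi_star n w a - Phi n w a * Phi_star n z a)"
    using main_alg[OF assms(3), of a n] by (simp add: PQ_Phi)
  have "z - w \<noteq> 0" using assms(3) by simp
  then show ?thesis unfolding 1 2[symmetric] by simp
qed

end
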